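(* Let $n\ge 2$ and let $f:\{0,1\}^n\to\{0,1\}^{n-1}$ be a function that eliminates one bit, i.e. there is $k\in\{0,\dots,n-1\}$ such that $f(x_{n-1}\dots x_{k+1}x_kx_{k-1}\dots x_0)=x_{n-1}\dots x_{k+1}x_{k-1}\dots x_0$ for all inputs. For $i=0,\dots,n-2$, run the algorithm $\mathrm{GPK}(\mathbf{e}_i)$ (with $m=n-1$), where $\mathbf{e}_i\in\{0,1\}^{n-1}$ is the string with a single $1$ in position $i$. Then each run outputs, with certainty, a string of the form $\mathbf{e}'_j\in\{0,1\}^n$ (the string of length $n$ with a single $1$ in position $j$), the $n-1$ outputs are distinct, and the unique $j\in\{0,\dots,n-1\}$ such that $\mathbf{e}'_j$ is not among the outputs is $j=k$, the eliminated bit. Hence the eliminated bit is determined by these $n-1$ runs.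
   Context: Bits of a string $\mathbf{x}=x_{n-1}\dots x_1x_0$ are indexed from the right starting at $0$; the string with a single $1$ in position $i$ is $0^{\,\ell-1-i}\,1\,0^{\,i}$ (of length $\ell$). For strings $\mathbf{y},\mathbf{z}$ of equal length, $\mathbf{y}\oplus\mathbf{z}$ is bitwise XOR and $\mathbf{y}\cdot\mathbf{z}=\bigoplus_j y_jz_j$. For $f:\{0,1\}^n\to\{0,1\}^m$, $\mathbf{U}_f$ is the unitary with $\mathbf{U}_f(\ket{\mathbf{x}}_n\otimes\ket{\mathbf{z}}_m)=\ket{\mathbf{x}}_n\otimes\ket{\mathbf{z}\oplus f(\mathbf{x})}_m$; $\mathbf{H}_k=\mathbf{H}^{\otimes k}$ with $\mathbf{H}$ the one-qubit Hadamard gate. The algorithm $\mathrm{GPK}(\mathbf{y})$ for a marker $\mathbf{y}\in\{0,1\}^m$: start in $\ket{\mathbf{0}}_n\otimes\ket{\mathbf{0}}_m$; apply Pauli $\mathbf{X}$ gates to the second register to obtain $\ket{\mathbf{0}}_n\otimes\ket{\mathbf{y}}_m$; apply $\mathbf{H}_{n+m}$ to all qubits; apply $\mathbf{U}_f$; apply $\mathbf{H}_n$ to the first register; measure the first register in the computational basis, obtaining an output $\delta\in\{0,1\}^n$. *)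

theory Defs
  imports Complex_Main
begin

text \<open>A bit string of length l is encoded as a natural number
x < 2^l, bit i of the string (indexed from the right, starting at 0) being
bit x i. The string with a single 1 in position i is 2^i. A state of a
register of q qubits is a function from basis indices {0..<2^q} to complex
amplitudes. For the two-register system |x>_n (x) |z>_m the basis index is
x * 2^m + z, so qubit j < m is bit j of the second register and qubit m + i
is bit i of the first register.\<close>

type_synonym state = "nat \<Rightarrow> complex"

definition ket :: "nat \<Rightarrow> state" where
  "ket b = (\<lambda>u. if u = b then 1 else 0)"

definition pauliX :: "nat \<Rightarrow> state \<Rightarrow> state" where
  "pauliX j \<psi> = (\<lambda>u. \<psi> (flip_bit j u))"

text \<open>One-qubit Hadamard gate on qubit j:
  H|0> = (|0>+|1>)/sqrt 2,  H|1> = (|0>-|1>)/sqrt 2.\<close>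
definition hadamard :: "nat \<Rightarrow> state \<Rightarrow> state" where
  "hadamard j \<psi> = (\<lambda>u. (\<psi> (unset_bit j u) + (if bit u j then -1 else 1) * \<psi> (set_bit j u))
                         / complex_of_real (sqrt 2))"

text \<open>The oracle U_f : |x>_n |z>_m \<mapsto> |x>_n |z xor f x>_m (a permutation of basis states,
  which is an involution).\<close>
definition Uf :: "nat \<Rightarrow> nat \<Rightarrow> (nat \<Rightarrow> nat) \<Rightarrow> state \<Rightarrow> state" where
  "Uf n m f \<psi> = (\<lambda>u. if u < 2 ^ (n + m)
      then \<psi> ((u div 2 ^ m) * 2 ^ m + xor (u mod 2 ^ m) (f (u div 2 ^ m)))
      else 0)"

definition gpk_state :: "nat \<Rightarrow> nat \<Rightarrow> (nat \<Rightarrow> nat) \<Rightarrow> nat \<Rightarrow> state" where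
  "gpk_state n m f y =
     (let \<psi>0 = ket 0;
          \<psi>1 = fold (\<lambda>j \<psi>. if bit y j then pauliX j \<psi> else \<psi>) [0..<m] \<psi>0;
          \<psi>2 = fold hadamard [0..<n + m] \<psi>1;
          \<psi>3 = Uf n m f \<psi>2;
          \<psi>4 = fold hadamard [m..<n + m] \<psi>3
      in \<psi>4)"

text \<open>Probability that measuring the first register (in the computational basis)
  yields the output \<delta>.\<close>
definition gpk_prob :: "nat \<Rightarrow> nat \<Rightarrow> (nat \<Rightarrow> nat) \<Rightarrow> nat \<Rightarrow> nat \<Rightarrow> real" where
  "gpk_prob n m f y \<delta> = (\<Sum>z<2 ^ m. (cmod (gpk_state n m f y (\<delta> * 2 ^ m + z)))\<^sup>2)"

definition eliminates_bit :: "nat \<Rightarrow> (nat \<Rightarrow> nat) \<Rightarrow> nat \<Rightarrow> bool" where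
  "eliminates_bit n f k \<longleftrightarrow> k < n \<and>
     (\<forall>x < 2 ^ n. f x < 2 ^ (n - 1) \<and>
        (\<forall>i < k. bit (f x) i = bit x i) \<and>
        (\<forall>i. k \<le> i \<and> i < n - 1 \<longrightarrow> bit (f x) i = bit x (i + 1)))"

end

theory Submission
  imports Defs
begin

lemma bit_div_pow: "bit ((a::nat) div 2^m) k = bit a (m+k)"
  by (simp add: bit_iff_odd div_mult2_eq power_add)

lemma bit_mod_pow: "bit ((a::nat) mod 2^m) k = (k < m \<and> bit a k)"
  by (metis bit_take_bit_iff take_bit_eq_mod)

lemma lt_pow2_iff: "(a::nat) < 2^q \<longleftrightarrow> (\<forall>k. \<not> bit a (q+k))"
proof -
  have "a < 2^q \<longleftrightarrow> a div 2^q = 0" by (simp add: div_eq_0_iff)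
  also have "\<dots> \<longleftrightarrow> (\<forall>k. \<not> bit (a div 2^q) k)"
    using bit_eq_iff[of "a div 2^q" 0] by simp
  finally show ?thesis by (simp add: bit_div_pow)
qed

definition prodst :: "nat \<Rightarrow> (nat \<Rightarrow> bool \<Rightarrow> complex) \<Rightarrow> state" where
  "prodst q g = (\<lambda>u. if u < 2^q then (\<Prod>l<q. g l (bit u l)) else 0)"

definition Hq :: "(bool \<Rightarrow> complex) \<Rightarrow> bool \<Rightarrow> complex" where
  "Hq h = (\<lambda>b. (h False + (if b then -1 else 1) * h True) / complex_of_real (sqrt 2))"

lemma prodst_cong: "(\<And>l. l < q \<Longrightarrow> g l = g' l) \<Longrightarrow> prodst q g = prodst q g'"
  unfolding prodst_def by (intro ext) (auto intro!: prod.cong)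

lemma prod_split_j:
  assumes "j < (q::nat)"
  shows "(\<Prod>l<q. h l) = h j * (\<Prod>l\<in>{..<q}-{j}. h l :: complex)"
  proof -
  have "j \<in> {..<q}" using assms by simp
  from prod.remove[of "{..<q}" j h] this show ?thesis by simp
qed

lemma hadamard_prodst:
  assumes "j < q"
  shows "hadamard j (prodst q g) = prodst q (g(j := Hq (g j)))"
proof (rule ext)
  fix u
  show "hadamard j (prodst q g) u = prodst q (g(j := Hq (g j))) u"
  proof (cases "u < 2^q")
    case True
    have u1: "unset_bit j u < 2^q" "set_bit j u < 2^q"
      using True assms by (auto simp: lt_pow2_iff bit_unset_bit_iff bit_set_bit_iff)
    have r1: "(\<Prod>l\<in>{..<q}-{j}. g l (bit (unset_bit j u) l)) = (\<Prod>l\<in>{..<q}-{j}. g l (bit u l))"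
      by (rule prod.cong) (auto simp: bit_unset_bit_iff)
    have r2: "(\<Prod>l\<in>{..<q}-{j}. g l (bit (set_bit j u) l)) = (\<Prod>l\<in>{..<q}-{j}. g l (bit u l))"
      by (rule prod.cong) (auto simp: bit_set_bit_iff)
    have r3: "(\<Prod>l\<in>{..<q}-{j}. (g(j := Hq (g j))) l (bit u l)) = (\<Prod>l\<in>{..<q}-{j}. g l (bit u l))"
      by (rule prod.cong) auto
    show ?thesis
      using True u1 assms
      apply (simp add: hadamard_def prodst_def)
      apply (simp add: prod_split_j[OF assms] r1 r2 r3 bit_unset_bit_iff bit_set_bit_iff Hq_def)
      apply (simp add: field_simps)
      done
  next
    case False
    have u1: "\<not> unset_bit j u < 2^q" "\<not> set_bit j u < 2^q"
      using False assms by (auto simp: lt_pow2_iff bit_unset_bit_iff bit_set_bit_iff)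
    then show ?thesis using False by (simp add: hadamard_def prodst_def)
  qed
qed

lemma pauliX_prodst:
  assumes "j < q"
  shows "pauliX j (prodst q g) = prodst q (g(j := (\<lambda>b. g j (\<not> b))))"
proof (rule ext)
  fix u :: nat
  have eq: "flip_bit j u < 2^q \<longleftrightarrow> u < 2^q"
    using assms by (auto simp: lt_pow2_iff bit_flip_bit_iff)
  have r1: "(\<Prod>l\<in>{..<q}-{j}. g l (bit (flip_bit j u) l)) = (\<Prod>l\<in>{..<q}-{j}. g l (bit u l))"
    by (rule prod.cong) (auto simp: bit_flip_bit_iff)
  have r3: "(\<Prod>l\<in>{..<q}-{j}. (g(j := (\<lambda>b. g j (\<not> b)))) l (bit u l)) = (\<Prod>l\<in>{..<q}-{j}. g l (bit u l))"
    by (rule prod.cong) auto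
  show "pauliX j (prodst q g) u = prodst q (g(j := (\<lambda>b. g j (\<not> b)))) u"
    using assms eq by (simp add: pauliX_def prodst_def prod_split_j[OF assms] r1 r3 bit_flip_bit_iff)
qed

lemma fold_gate:
  assumes "\<And>j g. j < q \<Longrightarrow> G j (prodst q g) = prodst q (g(j := F j (g j)))"
    and "distinct xs" and "\<forall>x\<in>set xs. x < q"
  shows "fold G xs (prodst q g) = prodst q (\<lambda>l. if l \<in> set xs then F l (g l) else g l)"
  using assms(2,3)
proof (induction xs arbitrary: g)
  case Nil then show ?case by simp
next
  case (Cons x xs)
  have "fold G (x # xs) (prodst q g) = fold G xs (prodst q (g(x := F x (g x))))"
    using Cons.prems assms(1) by simp
  also have "\<dots> = prodst q (\<lambda>l. if l \<in> set xs then F l ((g(x := F x (g x))) l) else (g(x := F x (g x))) l)"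
    using Cons by simp
  also have "\<dots> = prodst q (\<lambda>l. if l \<in> set (x # xs) then F l (g l) else g l)"
    using Cons.prems by (intro prodst_cong) auto
  finally show ?case .
qed

lemma ket0_prodst: "ket 0 = prodst q (\<lambda>l b. if b then 0 else 1)"
proof (rule ext)
  fix u
  show "ket 0 u = prodst q (\<lambda>l b. if b then 0 else 1) u"
  proof (cases "u < 2^q")
    case True
    have "(\<Prod>l<q. (if bit u l then 0 else 1 :: complex)) = (if \<exists>l<q. bit u l then 0 else 1)"
      by (auto simp: prod_zero_iff intro!: prod.neutral)
    moreover have "(\<exists>l<q. bit u l) \<longleftrightarrow> u \<noteq> 0"
    proof
      assume "\<exists>l<q. bit u l" then obtain l where "bit u l" by blast
      then show "u \<noteq> 0" by (cases "u = 0") simp_all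
    next
      assume "u \<noteq> 0"
      then obtain l where "bit u l" using bit_eq_iff[of u 0] by auto
      moreover have "l < q" using True calculation lt_pow2_iff[of u q]
        by (metis le_add_diff_inverse not_less)
      ultimately show "\<exists>l<q. bit u l" by auto
    qed
    ultimately show ?thesis using True by (simp add: ket_def prodst_def)
  next
    case False
    then have "u \<noteq> 0" by (cases "u = 0") auto
    then show ?thesis using False by (simp add: ket_def prodst_def)
  qed
qed

lemma bit_split: "bit (u::nat) l = (if l < m then bit (u mod 2^m) l else bit (u div 2^m) (l - m))"
  by (simp add: bit_mod_pow bit_div_pow)

lemma xor_lt: "(a::nat) < 2^m \<Longrightarrow> b < 2^m \<Longrightarrow> xor a b < 2^m"
  by (simp add: lt_pow2_iff bit_xor_iff)

lemma prod_scaled: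
  "(\<Prod>l<q. x l / (s::complex)) = (\<Prod>l<q. x l) / s ^ q"
  by (simp add: prod_dividef)

lemma uf_step:
  assumes fb: "\<And>x. x < 2^n \<Longrightarrow> f x < 2^m \<and> bit (f x) i = bit x j"
    and "i < m" "j < n"
  shows "Uf n m f (prodst (n+m) (\<lambda>l b. (if l = i then (if b then -1 else 1) else 1) / complex_of_real (sqrt 2)))
       = prodst (n+m) (\<lambda>l b. (if l = i then (if b then -1 else 1) else 1) * (if l = m + j then (if b then -1 else 1) else 1) / complex_of_real (sqrt 2))"
proof (rule ext)
  fix u :: nat
  let ?s = "complex_of_real (sqrt 2)"
  show "Uf n m f (prodst (n+m) (\<lambda>l b. (if l = i then (if b then -1 else 1) else 1) / ?s)) u
       = prodst (n+m) (\<lambda>l b. (if l = i then (if b then -1 else 1) else 1) * (if l = m + j then (if b then -1 else 1) else 1) / ?s) u"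
  proof (cases "u < 2^(n+m)")
    case False then show ?thesis by (simp add: Uf_def prodst_def)
  next
    case True
    define x where "x = u div 2^m"
    define z where "z = u mod 2^m"
    define v where "v = x * 2^m + xor z (f x)"
    have xl: "x < 2^n" using True unfolding x_def by (simp add: less_mult_imp_div_less power_add)
    have fx: "f x < 2^m" "bit (f x) i = bit x j" using fb[OF xl] by auto
    have zl: "z < 2^m" unfolding z_def by simp
    have xz: "xor z (f x) < 2^m" using xor_lt[OF zl fx(1)] .
    have vdiv: "v div 2^m = x" and vmod: "v mod 2^m = xor z (f x)"
      unfolding v_def using xz by simp_all
    have vl: "v < 2^(n+m)"
    proof -
      have "v < (x+1) * 2^m" unfolding v_def using xz by simp
      also have "\<dots> \<le> 2^n * 2^m" using xl by (intro mult_right_mono) auto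
      finally show ?thesis by (simp add: power_add)
    qed
    have bvi: "bit v i = (bit u i \<noteq> bit u (m + j))"
      using bit_split[of v i m] assms(2) vmod fx(2)
      by (simp add: bit_xor_iff z_def bit_mod_pow x_def bit_div_pow)
    have e1: "(\<Prod>l<n+m. (if l = i then (if bit v l then -1 else 1) else 1 :: complex)) = (if bit v i then -1 else 1)"
      using assms by (simp add: prod.delta)
    have e2: "(\<Prod>l<n+m. (if l = i then (if bit u l then -1 else 1) else 1) * (if l = m + j then (if bit u l then -1 else 1) else 1 :: complex))
       = (if bit u i then -1 else 1) * (if bit u (m+j) then -1 else 1)"
      using assms by (simp add: prod.distrib prod.delta)
    have "Uf n m f (prodst (n+m) (\<lambda>l b. (if l = i then (if b then -1 else 1) else 1) / ?s)) u
        = prodst (n+m) (\<lambda>l b. (if l = i then (if b then -1 else 1) else 1) / ?s) v"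
      using True by (simp add: Uf_def x_def z_def v_def)
    also have "\<dots> = (if bit v i then -1 else 1) / ?s ^ (n+m)"
      using vl by (simp add: prodst_def prod_scaled e1)
    also have "\<dots> = (if bit u i then -1 else 1) * (if bit u (m+j) then -1 else 1) / ?s ^ (n+m)"
      using bvi by simp
    also have "\<dots> = prodst (n+m) (\<lambda>l b. (if l = i then (if b then -1 else 1) else 1) * (if l = m + j then (if b then -1 else 1) else 1) / ?s) u"
      using True by (simp add: prodst_def prod_scaled e2)
    finally show ?thesis .
  qed
qed

lemma s2sq: "complex_of_real (sqrt 2) * complex_of_real (sqrt 2) = 2"
  by (simp flip: of_real_mult)

lemma gpk_main:
  assumes fb: "\<And>x. x < 2^n \<Longrightarrow> f x < 2^m \<and> bit (f x) i = bit x j"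
    and im: "i < m" and jn: "j < n"
  shows "gpk_prob n m f (2^i) (2^j) = 1"
proof -
  define q where "q = n + m"
  let ?s = "complex_of_real (sqrt 2)"
  define g0 :: "nat \<Rightarrow> bool \<Rightarrow> complex" where "g0 = (\<lambda>l b. if b then 0 else 1)"
  define F where "F = (\<lambda>l (h :: bool \<Rightarrow> complex). if bit ((2::nat)^i) l then (\<lambda>b. h (\<not> b)) else h)"
  define G2 where "G2 = (\<lambda>l b. (if l = i then (if b then -1 else 1) else 1) / ?s)"
  define G3 where "G3 = (\<lambda>l b. (if l = i then (if b then -1 else 1) else 1) * (if l = m + j then (if b then -1 else 1) else 1) / ?s)"
  have gateX: "(\<lambda>j \<psi>. if bit ((2::nat)^i) j then pauliX j \<psi> else \<psi>) l (prodst q g) = prodst q (g(l := F l (g l)))"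
    if "l < q" for l g
    using that pauliX_prodst[of l q g] by (simp add: F_def)
  have gateH: "hadamard l (prodst q g) = prodst q (g(l := (\<lambda>l. Hq) l (g l)))" if "l < q" for l g
    using hadamard_prodst[OF that] by simp
  have st1: "fold (\<lambda>j \<psi>. if bit ((2::nat)^i) j then pauliX j \<psi> else \<psi>) [0..<m] (ket 0)
      = prodst q (\<lambda>l. if l \<in> set [0..<m] then F l (g0 l) else g0 l)"
    unfolding ket0_prodst[of q] g0_def[symmetric]
    by (rule fold_gate[OF gateX]) (auto simp: q_def)
  have st2: "fold hadamard [0..<q] (prodst q (\<lambda>l. if l \<in> set [0..<m] then F l (g0 l) else g0 l))
      = prodst q G2"
  proof -
    have "fold hadamard [0..<q] (prodst q (\<lambda>l. if l \<in> set [0..<m] then F l (g0 l) else g0 l))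
      = prodst q (\<lambda>l'. if l' \<in> set [0..<q] then Hq ((\<lambda>l. if l \<in> set [0..<m] then F l (g0 l) else g0 l) l') else (\<lambda>l. if l \<in> set [0..<m] then F l (g0 l) else g0 l) l')"
      by (rule fold_gate[OF gateH]) auto
    also have "\<dots> = prodst q G2"
      using im by (intro prodst_cong) (auto simp: G2_def F_def g0_def Hq_def bit_exp_iff fun_eq_iff)
    finally show ?thesis .
  qed
  have st3: "Uf n m f (prodst q G2) = prodst q G3"
    unfolding q_def G2_def G3_def by (rule uf_step[OF fb im jn])
  have st4: "fold hadamard [m..<q] (prodst q G3) = prodst q (\<lambda>l. if l \<in> set [m..<q] then Hq (G3 l) else G3 l)"
    by (rule fold_gate[OF gateH]) auto
  define G4 where "G4 = (\<lambda>l. if l \<in> set [m..<q] then Hq (G3 l) else G3 l)"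
  have state: "gpk_state n m f (2^i) = prodst q G4"
    unfolding gpk_state_def Let_def st1 q_def[symmetric] st2 st3 st4 G4_def by simp
  have val: "(cmod (gpk_state n m f (2^i) (2^j * 2^m + z)))\<^sup>2 = 1 / 2^m" if zl: "z < 2^m" for z
  proof -
    define u where "u = 2^j * 2^m + z"
    have ul: "u < 2^q"
    proof -
      have "u < (2^j + 1) * 2^m" unfolding u_def using zl by simp
      also have "\<dots> \<le> 2^n * 2^m" using jn
        by (intro mult_right_mono) (auto simp: Suc_le_eq)
      finally show ?thesis by (simp add: q_def power_add)
    qed
    have udiv: "u div 2^m = 2^j" and umod: "u mod 2^m = z" unfolding u_def using zl by simp_all
    have hi: "(\<Prod>l\<in>{m..<q}. G4 l (bit u l)) = 1"
    proof (rule prod.neutral, rule ballI)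
      fix l assume l: "l \<in> {m..<q}"
      have "bit u l = (l = m + j)" using bit_split[of u l m] l udiv
        by (auto simp: bit_exp_iff)
      then show "G4 l (bit u l) = 1" using l im
        by (auto simp: G4_def G3_def Hq_def q_def s2sq field_simps)
    qed
    have lo: "(\<Prod>l<m. G4 l (bit u l)) = (if bit u i then -1 else 1) / ?s ^ m"
    proof -
      have "(\<Prod>l<m. G4 l (bit u l)) = (\<Prod>l<m. (if l = i then (if bit u l then -1 else 1) else 1) / ?s)"
        by (rule prod.cong) (auto simp: G4_def G3_def)
      also have "\<dots> = (if bit u i then -1 else 1) / ?s ^ m"
        using im by (simp add: prod_scaled prod.delta)
      finally show ?thesis .
    qed
    have "(\<Prod>l<q. G4 l (bit u l)) = (\<Prod>l<m. G4 l (bit u l)) * (\<Prod>l\<in>{m..<q}. G4 l (bit u l))"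
      using prod.atLeastLessThan_concat[of 0 m q "\<lambda>l. G4 l (bit u l)"]
      by (simp add: q_def atLeast0LessThan)
    then have pv: "gpk_state n m f (2^i) u = (if bit u i then -1 else 1) / ?s ^ m"
      using ul by (simp add: state prodst_def hi lo)
    have sq: "(sqrt 2 ^ m)\<^sup>2 = (2::real) ^ m"
    proof -
      have "(sqrt 2 ^ m)\<^sup>2 = (sqrt 2 ^ 2) ^ m" by (metis power_mult mult.commute)
      then show ?thesis by simp
    qed
    have "(cmod ((if bit u i then -1 else 1) / ?s ^ m))\<^sup>2 = 1 / 2^m"
      using sq by (simp add: norm_divide norm_power power_divide flip: power_mult_distrib)
    then show ?thesis using pv u_def by simp
  qed
  have "gpk_prob n m f (2^i) (2^j) = (\<Sum>z<(2::nat)^m. 1 / 2^m :: real)"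
    unfolding gpk_prob_def by (rule sum.cong) (auto simp: val)
  also have "\<dots> = 1" by simp
  finally show ?thesis .
qed

theorem lemma2p2:
  fixes n k :: nat and f :: "nat \<Rightarrow> nat"
  assumes "n \<ge> 2"
    and "eliminates_bit n f k"
  shows "\<exists>out :: nat \<Rightarrow> nat.
           (\<forall>i < n - 1. out i < n \<and> gpk_prob n (n - 1) f (2 ^ i) (2 ^ out i) = 1)
         \<and> inj_on out {..<n - 1}
         \<and> {j. j < n \<and> j \<notin> out ` {..<n - 1}} = {k}"
proof -
  define out where "out = (\<lambda>i::nat. if i < k then i else i + 1)"
  have kn: "k < n" using assms(2) by (simp add: eliminates_bit_def)
  have A: "out i < n \<and> gpk_prob n (n - 1) f (2 ^ i) (2 ^ out i) = 1" if i: "i < n - 1" for i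
  proof
    show "out i < n" using i by (auto simp: out_def)
    show "gpk_prob n (n - 1) f (2 ^ i) (2 ^ out i) = 1"
    proof (rule gpk_main)
      show "i < n - 1" by (rule i)
      show "out i < n" using i by (auto simp: out_def)
      fix x :: nat assume "x < 2^n"
      then show "f x < 2 ^ (n - 1) \<and> bit (f x) i = bit x (out i)"
        using assms(2) i unfolding eliminates_bit_def out_def by auto
    qed
  qed
  have B: "inj_on out {..<n - 1}"
    by (auto simp: inj_on_def out_def split: if_splits)
  have C: "{j. j < n \<and> j \<notin> out ` {..<n - 1}} = {k}"
  proof (rule set_eqI, rule iffI)
    fix j assume "j \<in> {j. j < n \<and> j \<notin> out ` {..<n - 1}}"
    then have j: "j < n" "j \<notin> out ` {..<n - 1}" by auto
    show "j \<in> {k}"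
    proof (rule ccontr)
      assume "j \<notin> {k}"
      then consider "j < k" | "j > k" by force
      then show False
      proof cases
        case 1
        then have "out j = j" "j < n - 1" using kn by (auto simp: out_def)
        then show False using j(2) by force
      next
        case 2
        then have "out (j - 1) = j" "j - 1 < n - 1" using j(1) by (auto simp: out_def)
        then show False using j(2) by force
      qed
    qed
  next
    fix j assume "j \<in> {k}"
    then show "j \<in> {j. j < n \<and> j \<notin> out ` {..<n - 1}}"
      using kn by (auto simp: out_def split: if_splits)
  qed
  show ?thesis using A B C by blast
qed

end
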